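(* Let $\{Q_j\}_{j=0}^N$ be a finite collection of cubes in $\mathbb{R}^n$. For all $\delta\in(0,1)$, \[ \Big|\bigcup_{j=0}^N(1+\delta)Q_j\setminus\bigcup_{j=0}^N Q_j\Big|\lesssim_n \delta\,\Big|\bigcup_{j=0}^N Q_j\Big|. \] In particular, if $\{Q_j\}_{j=0}^N$ is a satellite configuration of cubes with center $Q_0$, then the left-hand side is $\lesssim_n\delta|Q_0|$.
   Context: Cubes are axis-parallel cubes in $\mathbb{R}^n$; $cQ$ denotes the concentric dilate of $Q$ by factor $c>0$, $r_Q$ the sidelength of $Q$, and $|\cdot|$ Lebesgue measure. A finite collection $\{Q_j\}_{j=0}^N$ is a satellite configuration of cubes with center $Q_0$ if $Q_j\cap Q_0\neq\emptyset$ and $r_{Q_j}\le r_{Q_0}$ for all $j\in\{1,\dots,N\}$. $A\lesssim_n B$ means $A\le C_nB$ with $C_n$ depending only on $n$. *)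

theory Defs
  imports "HOL-Analysis.Analysis"
begin

text \<open>Axis-parallel (closed) cube with center c and sidelength r. The concentric
dilate of this cube by a factor t > 0 is cube c (t * r).\<close>
definition cube :: "'a::euclidean_space \<Rightarrow> real \<Rightarrow> 'a set" where
  "cube c r = cbox (c - (r / 2) *\<^sub>R One) (c + (r / 2) *\<^sub>R One)"

definition satellite_config :: "nat \<Rightarrow> (nat \<Rightarrow> 'a::euclidean_space) \<Rightarrow> (nat \<Rightarrow> real) \<Rightarrow> bool" where
  "satellite_config N x r \<longleftrightarrow>
     (\<forall>j\<in>{1..N}. cube (x j) (r j) \<inter> cube (x 0) (r 0) \<noteq> {} \<and> r j \<le> r 0)"

end

theory Submission
  imports Defs
begin


definition Iv :: "real \<times> real \<Rightarrow> real set" where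
  "Iv p = {fst p - snd p .. fst p + snd p}"
definition Dv :: "real \<Rightarrow> real \<times> real \<Rightarrow> real set" where
  "Dv d p = {fst p - (1+d) * snd p .. fst p + (1+d) * snd p}"

lemma merge_cover:
  assumes "0 \<le> snd p" "0 \<le> snd q" "Iv p \<inter> Iv q \<noteq> {}" "0 \<le> d"
  defines "lo \<equiv> min (fst p - snd p) (fst q - snd q)"
  defines "hi \<equiv> max (fst p + snd p) (fst q + snd q)"
  defines "m \<equiv> ((lo+hi)/2, (hi-lo)/2)"
  shows "Iv m = Iv p \<union> Iv q" "Dv d p \<union> Dv d q \<subseteq> Dv d m" "0 \<le> snd m"
proof -
  obtain t where t: "t \<in> Iv p" "t \<in> Iv q" using assms(3) by blast
  have e1: "(lo+hi)/2 - (hi-lo)/2 = lo" "(lo+hi)/2 + (hi-lo)/2 = hi" by (simp_all add: field_simps)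
  have lh: "lo \<le> fst p - snd p" "lo \<le> fst q - snd q" "fst p + snd p \<le> hi" "fst q + snd q \<le> hi"
    "lo = fst p - snd p \<or> lo = fst q - snd q" "hi = fst p + snd p \<or> hi = fst q + snd q"
    unfolding lo_def hi_def by (auto simp: min_def max_def)
  have Im: "Iv m = {lo..hi}" unfolding Iv_def m_def using e1 by simp
  show "Iv m = Iv p \<union> Iv q" unfolding Im using t lh unfolding Iv_def
    by auto
  show "0 \<le> snd m" using assms(1,2) lh unfolding m_def by auto
  have a: "d * snd p \<le> d * ((hi-lo)/2)" "d * snd q \<le> d * ((hi-lo)/2)"
  proof -
    have "snd p \<le> (hi-lo)/2" using lh(1,3) by (simp add: field_simps)
    moreover have "snd q \<le> (hi-lo)/2" using lh(2,4) by (simp add: field_simps)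
    ultimately show "d * snd p \<le> d * ((hi-lo)/2)" "d * snd q \<le> d * ((hi-lo)/2)"
      using assms(4) by (meson mult_left_mono)+
  qed
  have e2: "(lo+hi)/2 - (1+d)*((hi-lo)/2) = lo - d * ((hi-lo)/2)" "(lo+hi)/2 + (1+d)*((hi-lo)/2) = hi + d * ((hi-lo)/2)"
    by (simp_all add: field_simps)
  have Dm: "Dv d m = {lo - d * ((hi-lo)/2) .. hi + d * ((hi-lo)/2)}" unfolding Dv_def m_def using e2 by simp
  have ep: "(1+d) * snd p = snd p + d * snd p" "(1+d) * snd q = snd q + d * snd q" by (simp_all add: distrib_right)
  have "Dv d p \<subseteq> Dv d m" unfolding Dm
    unfolding Dv_def ep using a(1) lh(1,3) by (simp only: atLeastatMost_subset_iff) (intro disjI2 conjI; linarith)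
  moreover have "Dv d q \<subseteq> Dv d m" unfolding Dm
    unfolding Dv_def ep using a(2) lh(2,4) by (simp only: atLeastatMost_subset_iff) (intro disjI2 conjI; linarith)
  ultimately show "Dv d p \<union> Dv d q \<subseteq> Dv d m" by blast
qed

lemma Iv_sets[measurable]: "Iv p \<in> sets borel" and Dv_sets[measurable]: "Dv d p \<in> sets borel"
  unfolding Iv_def Dv_def by simp_all

lemma emeasure_Iv: "0 \<le> snd p \<Longrightarrow> emeasure lborel (Iv p) = ennreal (2 * snd p)"
  unfolding Iv_def by simp
lemma emeasure_Dv: "0 \<le> snd p \<Longrightarrow> 0 \<le> d \<Longrightarrow> emeasure lborel (Dv d p) = ennreal (2 * (1+d) * snd p)"
  unfolding Dv_def by simp
lemma Iv_Dv: "0 \<le> snd p \<Longrightarrow> 0 \<le> d \<Longrightarrow> Iv p \<subseteq> Dv d p"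
  unfolding Iv_def Dv_def by (auto simp: distrib_right intro!: mult_nonneg_nonneg)

lemma emeasure_Dv_Iv: assumes "0 \<le> snd p" "0 \<le> d"
  shows "emeasure lborel (Dv d p - Iv p) = ennreal d * emeasure lborel (Iv p)"
proof -
  have "emeasure lborel (Dv d p - Iv p) = emeasure lborel (Dv d p) - emeasure lborel (Iv p)"
    using assms by (intro emeasure_Diff) (auto simp: emeasure_Iv Iv_Dv)
  also have "\<dots> = ennreal (2 * (1+d) * snd p - 2 * snd p)"
    using assms by (simp add: emeasure_Iv emeasure_Dv ennreal_minus)
  also have "2 * (1+d) * snd p - 2 * snd p = d * (2 * snd p)" by (simp add: algebra_simps)
  also have "ennreal (d * (2 * snd p)) = ennreal d * emeasure lborel (Iv p)"
    using assms by (simp add: emeasure_Iv ennreal_mult)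
  finally show ?thesis .
qed

lemma oneD:
  fixes P :: "(real \<times> real) set"
  assumes "finite P" "\<forall>p\<in>P. 0 \<le> snd p" "0 \<le> d"
  shows "emeasure lborel ((\<Union>p\<in>P. Dv d p) - (\<Union>p\<in>P. Iv p)) \<le> ennreal d * emeasure lborel (\<Union>p\<in>P. Iv p)"
  using assms
proof (induction "card P" arbitrary: P rule: less_induct)
  case less
  show ?case
  proof (cases "\<exists>p\<in>P. \<exists>q\<in>P. p \<noteq> q \<and> Iv p \<inter> Iv q \<noteq> {}")
    case True
    then obtain p q where pq: "p\<in>P" "q\<in>P" "p\<noteq>q" "Iv p \<inter> Iv q \<noteq> {}" by blast
    define lo where "lo = min (fst p - snd p) (fst q - snd q)"
    define hi where "hi = max (fst p + snd p) (fst q + snd q)"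
    define m where "m = ((lo+hi)/2, (hi-lo)/2)"
    have mc: "Iv m = Iv p \<union> Iv q" "Dv d p \<union> Dv d q \<subseteq> Dv d m" "0 \<le> snd m"
      using merge_cover[of p q d] pq less.prems unfolding lo_def hi_def m_def by auto
    define P' where "P' = insert m (P - {p,q})"
    have c2: "card {p,q} = 2" using pq by simp
    have "card (P - {p,q}) = card P - 2" using pq less.prems c2 by (subst card_Diff_subset) auto
    moreover have "card {p,q} \<le> card P" using pq less.prems by (intro card_mono) auto
    moreover have "card P' \<le> Suc (card (P - {p,q}))" unfolding P'_def using less.prems(1) by (simp add: card_insert_if)
    ultimately have cP: "card P' < card P" using c2 by linarith
    have fin: "finite P'" "\<forall>p\<in>P'. 0 \<le> snd p" using less.prems mc unfolding P'_def by auto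
    have IH: "emeasure lborel ((\<Union>p\<in>P'. Dv d p) - (\<Union>p\<in>P'. Iv p)) \<le> ennreal d * emeasure lborel (\<Union>p\<in>P'. Iv p)"
      using less.hyps[OF cP fin less.prems(3)] .
    have U: "(\<Union>p\<in>P'. Iv p) = (\<Union>p\<in>P. Iv p)" unfolding P'_def using mc(1) pq by auto
    have Ds: "(\<Union>p\<in>P. Dv d p) \<subseteq> (\<Union>p\<in>P'. Dv d p)" unfolding P'_def using mc(2) by auto
    have "emeasure lborel ((\<Union>p\<in>P. Dv d p) - (\<Union>p\<in>P. Iv p)) \<le> emeasure lborel ((\<Union>p\<in>P'. Dv d p) - (\<Union>p\<in>P. Iv p))"
      using Ds fin(1) less.prems(1) by (intro emeasure_mono) (auto intro!: sets.Diff sets.finite_UN)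
    then show ?thesis using IH unfolding U by simp
  next
    case False
    have "emeasure lborel ((\<Union>p\<in>P. Dv d p) - (\<Union>p\<in>P. Iv p)) \<le> emeasure lborel (\<Union>p\<in>P. Dv d p - Iv p)"
      using less.prems(1) by (intro emeasure_mono) auto
    also have "\<dots> \<le> (\<Sum>p\<in>P. emeasure lborel (Dv d p - Iv p))"
      using less.prems(1) by (intro emeasure_subadditive_finite) auto
    also have "\<dots> = (\<Sum>p\<in>P. ennreal d * emeasure lborel (Iv p))"
      using less.prems by (intro sum.cong refl emeasure_Dv_Iv) auto
    also have "\<dots> = ennreal d * (\<Sum>p\<in>P. emeasure lborel (Iv p))" by (simp add: sum_distrib_left)
    also have "(\<Sum>p\<in>P. emeasure lborel (Iv p)) = emeasure lborel (\<Union>p\<in>P. Iv p)"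
    proof (rule sum_emeasure)
      show "disjoint_family_on Iv P" using False unfolding disjoint_family_on_def by blast
    qed (use less.prems(1) in auto)
    finally show ?thesis .
  qed
qed



definition VV :: "'b set \<Rightarrow> 'j set \<Rightarrow> ('j \<Rightarrow> 'b \<Rightarrow> real) \<Rightarrow> ('j \<Rightarrow> 'b \<Rightarrow> real) \<Rightarrow> ('b \<Rightarrow> real) set" where
  "VV A J z w = {f. \<exists>j\<in>J. \<forall>b\<in>A. \<bar>f b - z j b\<bar> \<le> w j b}"

lemma VV_meas:
  assumes "finite A" "finite J"
  shows "VV A J z w \<inter> space (PiM A (\<lambda>_. lborel)) \<in> sets (PiM A (\<lambda>_. lborel))"
proof -
  have "VV A J z w \<inter> space (PiM A (\<lambda>_. lborel)) = {f \<in> space (PiM A (\<lambda>_. lborel)). \<exists>j\<in>J. \<forall>b\<in>A. \<bar>f b - z j b\<bar> \<le> w j b}"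
    unfolding VV_def by auto
  also have "\<dots> \<in> sets (PiM A (\<lambda>_. lborel))"
    using assms by measurable
  finally show ?thesis .
qed

lemma slice:
  assumes "k \<in> A"
  shows "{y. x(k:=y) \<in> VV A J z w} = (\<Union>j\<in>{j\<in>J. \<forall>b\<in>A-{k}. \<bar>x b - z j b\<bar> \<le> w j b}. {z j k - w j k .. z j k + w j k})"
proof -
  have "x(k:=y) \<in> VV A J z w \<longleftrightarrow> (\<exists>j\<in>J. (\<forall>b\<in>A-{k}. \<bar>x b - z j b\<bar> \<le> w j b) \<and> \<bar>y - z j k\<bar> \<le> w j k)" for y
    unfolding VV_def using assms by (auto; metis fun_upd_other)
  then show ?thesis by (auto simp: abs_le_iff)
qed

lemma step:
  fixes A :: "'b set" and J :: "'j set"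
  assumes A: "finite A" "k \<in> A" and J: "finite J" and w: "\<forall>j\<in>J. \<forall>b\<in>A. 0 \<le> w j b" and d: "0 \<le> d"
  shows "emeasure (PiM A (\<lambda>_. lborel)) ((VV A J z (\<lambda>j. (w j)(k := (1+d) * w j k)) - VV A J z w) \<inter> space (PiM A (\<lambda>_. lborel)))
     \<le> ennreal d * emeasure (PiM A (\<lambda>_. lborel)) (VV A J z w \<inter> space (PiM A (\<lambda>_. lborel)))"
proof -
  interpret product_sigma_finite "\<lambda>_::'b. lborel::real measure" by standard
  define w' where "w' = (\<lambda>j. (w j)(k := (1+d) * w j k))"
  define M where "M = PiM A (\<lambda>_. lborel::real measure)"
  define A' where "A' = A - {k}"
  have AA: "A = insert k A'" "finite A'" "k \<notin> A'" using A unfolding A'_def by auto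
  let ?G = "VV A J z w' - VV A J z w"
  let ?V = "VV A J z w"
  have sG: "?G \<inter> space M \<in> sets M"
  proof -
    have "?G \<inter> space M = (VV A J z w' \<inter> space M) - (?V \<inter> space M)" by auto
    thus ?thesis unfolding M_def using VV_meas A J by (metis sets.Diff)
  qed
  have sV: "?V \<inter> space M \<in> sets M" unfolding M_def using VV_meas A J by metis
  have mG: "(indicator ?G :: _ \<Rightarrow> ennreal) \<in> borel_measurable M" using sG by (simp add: borel_measurable_indicator_iff)
  have mV: "(indicator ?V :: _ \<Rightarrow> ennreal) \<in> borel_measurable M" using sV by (simp add: borel_measurable_indicator_iff)
  have "emeasure M (?G \<inter> space M) = (\<integral>\<^sup>+f. indicator ?G f \<partial>M)"
    using sG by (simp add: nn_integral_indicator')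
  also have "\<dots> = (\<integral>\<^sup>+x. \<integral>\<^sup>+y. indicator ?G (x(k:=y)) \<partial>lborel \<partial>PiM A' (\<lambda>_. lborel))"
    using mG unfolding M_def AA(1) by (intro product_nn_integral_insert AA(2,3)) 
  also have "\<dots> \<le> (\<integral>\<^sup>+x. \<integral>\<^sup>+y. ennreal d * indicator ?V (x(k:=y)) \<partial>lborel \<partial>PiM A' (\<lambda>_. lborel))"
  proof (rule nn_integral_mono)
    fix x
    define Jx where "Jx = {j\<in>J. \<forall>b\<in>A-{k}. \<bar>x b - z j b\<bar> \<le> w j b}"
    define P where "P = (\<lambda>j. (z j k, w j k)) ` Jx"
    have Jx': "Jx = {j\<in>J. \<forall>b\<in>A-{k}. \<bar>x b - z j b\<bar> \<le> w' j b}"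
      unfolding Jx_def w'_def by auto
    have PI: "(\<Union>p\<in>P. Iv p) = (\<Union>j\<in>Jx. {z j k - w j k .. z j k + w j k})"
      unfolding P_def Iv_def by auto
    have PD: "(\<Union>p\<in>P. Dv d p) = (\<Union>j\<in>Jx. {z j k - w' j k .. z j k + w' j k})"
      unfolding P_def Dv_def w'_def by auto
    have s1: "{y. x(k:=y) \<in> ?V} = (\<Union>p\<in>P. Iv p)"
      unfolding PI Jx_def by (rule slice[OF A(2)])
    have s2: "{y. x(k:=y) \<in> VV A J z w'} = (\<Union>p\<in>P. Dv d p)"
      unfolding PD Jx' by (rule slice[OF A(2)])
    have finP: "finite P" "\<forall>p\<in>P. 0 \<le> snd p" using J w A(2) unfolding P_def Jx_def by auto
    have e1: "(\<lambda>y. indicator ?G (x(k:=y)) :: ennreal) = indicator ((\<Union>p\<in>P. Dv d p) - (\<Union>p\<in>P. Iv p))"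
      using s1 s2 by (auto simp: indicator_def fun_eq_iff)
    have e2: "(\<lambda>y. ennreal d * indicator ?V (x(k:=y))) = (\<lambda>y. ennreal d * indicator (\<Union>p\<in>P. Iv p) y)"
      using s1 by (auto simp: indicator_def fun_eq_iff)
    have mI: "(\<Union>p\<in>P. Iv p) \<in> sets lborel" using finP by (auto intro!: sets.finite_UN)
    have mD: "(\<Union>p\<in>P. Dv d p) \<in> sets lborel" using finP by (auto intro!: sets.finite_UN)
    show "(\<integral>\<^sup>+y. indicator ?G (x(k:=y)) \<partial>lborel) \<le> (\<integral>\<^sup>+y. ennreal d * indicator ?V (x(k:=y)) \<partial>lborel)"
      unfolding e1 e2 using mI mD oneD[OF finP d]
      by (simp add: nn_integral_cmult_indicator)
  qed
  also have "\<dots> = (\<integral>\<^sup>+f. ennreal d * indicator ?V f \<partial>M)"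
  proof -
    have "(\<lambda>f. ennreal d * indicator ?V f) \<in> borel_measurable M"
      using mV by (intro borel_measurable_times_ennreal borel_measurable_const)
    thus ?thesis unfolding M_def AA(1) by (intro product_nn_integral_insert[symmetric] AA(2,3))
  qed
  also have "\<dots> = ennreal d * (\<integral>\<^sup>+f. indicator ?V f \<partial>M)"
    using mV by (rule nn_integral_cmult)
  also have "\<dots> = ennreal d * emeasure M (?V \<inter> space M)"
    using sV by (simp add: nn_integral_indicator')
  finally show ?thesis unfolding M_def w'_def .
qed



definition dil :: "real \<Rightarrow> 'b set \<Rightarrow> ('j \<Rightarrow> 'b \<Rightarrow> real) \<Rightarrow> ('j \<Rightarrow> 'b \<Rightarrow> real)" where
  "dil d S w = (\<lambda>j b. if b \<in> S then (1+d) * w j b else w j b)"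

lemma em_sub: "A \<subseteq> B \<union> C \<Longrightarrow> B \<in> sets M \<Longrightarrow> C \<in> sets M \<Longrightarrow> emeasure M A \<le> emeasure M B + emeasure M C"
  by (rule order_trans[OF emeasure_mono[OF _ sets.Un] emeasure_subadditive])

lemma diff_sp: "X \<inter> space M \<in> sets M \<Longrightarrow> Y \<inter> space M \<in> sets M \<Longrightarrow> (X - Y) \<inter> space M \<in> sets M"
proof -
  assume a: "X \<inter> space M \<in> sets M" "Y \<inter> space M \<in> sets M"
  have "(X - Y) \<inter> space M = (X \<inter> space M) - (Y \<inter> space M)" by auto
  thus ?thesis using a by simp
qed

lemma ennreal_arith:
  fixes a :: ennreal and d q :: real
  assumes "0 \<le> d" "d \<le> 1" "0 \<le> q"
  shows "ennreal d * (a + ennreal (d*q) * a) + ennreal (d*q) * a \<le> ennreal (d * (2*q+1)) * a"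
proof -
  have e1: "ennreal d * (a + ennreal (d*q) * a) + ennreal (d*q) * a = (ennreal d + ennreal d * ennreal (d*q) + ennreal (d*q)) * a"
    by (simp only: distrib_left distrib_right mult.assoc)
  have e2: "ennreal d + ennreal d * ennreal (d*q) + ennreal (d*q) = ennreal (d + d*(d*q) + d*q)"
    using assms by (simp add: ennreal_mult ennreal_plus)
  have e3: "ennreal (d + d*(d*q) + d*q) \<le> ennreal (d * (2*q+1))"
  proof (rule ennreal_leI)
    have "d*(d*q) \<le> 1*(d*q)" using assms by (intro mult_right_mono) auto
    thus "d + d*(d*q) + d*q \<le> d * (2*q+1)" by (simp add: algebra_simps)
  qed
  show ?thesis unfolding e1 e2 by (rule mult_right_mono[OF e3]) simp
qed

lemma iter:
  fixes A :: "'b set" and J :: "'j set"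
  assumes A: "finite A" and S: "S \<subseteq> A" and J: "finite J" and w: "\<forall>j\<in>J. \<forall>b\<in>A. 0 \<le> w j b"
    and d: "0 \<le> d" "d \<le> 1"
  shows "emeasure (PiM A (\<lambda>_. lborel)) ((VV A J z (dil d S w) - VV A J z w) \<inter> space (PiM A (\<lambda>_. lborel)))
     \<le> ennreal (d * (2 ^ card S - 1)) * emeasure (PiM A (\<lambda>_. lborel)) (VV A J z w \<inter> space (PiM A (\<lambda>_. lborel)))"
proof -
  have "finite S" using S A finite_subset by blast
  from this S show ?thesis
  proof (induction S rule: finite_induct)
    case empty
    have "dil d {} w = w" unfolding dil_def by auto
    then show ?case by simp
  next
    case (insert k S)
    define M where "M = PiM A (\<lambda>_. lborel::real measure)"
    define e where "e X = emeasure M (X \<inter> space M)" for X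
    define V0 where "V0 = VV A J z w"
    define VS where "VS = VV A J z (dil d S w)"
    define VS' where "VS' = VV A J z (dil d (insert k S) w)"
    define q :: real where "q = 2 ^ card S - 1"
    have q0: "0 \<le> q" unfolding q_def by simp
    have IH: "e (VS - V0) \<le> ennreal (d * q) * e V0"
      unfolding e_def M_def VS_def V0_def q_def using insert.prems by (intro insert.IH) simp
    have dd: "dil d (insert k S) w = (\<lambda>j. (dil d S w j)(k := (1+d) * dil d S w j k))"
      using insert.hyps unfolding dil_def by (auto simp: fun_eq_iff)
    have wS: "\<forall>j\<in>J. \<forall>b\<in>A. 0 \<le> dil d S w j b" using w d unfolding dil_def by auto
    have st: "e (VS' - VS) \<le> ennreal d * e VS"
      unfolding e_def M_def VS'_def VS_def dd
      using insert.prems by (intro step[OF A _ J wS d(1)]) simp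
    have mVV: "VV A J z w' \<inter> space M \<in> sets M" for w' unfolding M_def using VV_meas[OF A J] .
    have e1: "e (VS' - V0) \<le> e (VS' - VS) + e (VS - V0)"
    proof -
      have "(VS' - V0) \<inter> space M \<subseteq> ((VS' - VS) \<inter> space M) \<union> ((VS - V0) \<inter> space M)" by auto
      moreover have "(VS' - VS) \<inter> space M \<in> sets M" "(VS - V0) \<inter> space M \<in> sets M"
        using mVV unfolding VS'_def VS_def V0_def by (simp_all add: diff_sp)
      ultimately show ?thesis unfolding e_def by (rule em_sub)
    qed
    have e2: "e VS \<le> e V0 + e (VS - V0)"
    proof -
      have "VS \<inter> space M \<subseteq> (V0 \<inter> space M) \<union> ((VS - V0) \<inter> space M)" by auto
      moreover have "V0 \<inter> space M \<in> sets M" "(VS - V0) \<inter> space M \<in> sets M"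
        using mVV unfolding VS'_def VS_def V0_def by (simp_all add: diff_sp)
      ultimately show ?thesis unfolding e_def by (rule em_sub)
    qed
    have "e (VS' - V0) \<le> ennreal d * (e V0 + ennreal (d * q) * e V0) + ennreal (d*q) * e V0"
    proof -
      have "e (VS' - V0) \<le> ennreal d * e VS + e (VS - V0)" using e1 st by (meson add_right_mono order_trans)
      also have "\<dots> \<le> ennreal d * (e V0 + ennreal (d * q) * e V0) + ennreal (d*q) * e V0"
        using e2 IH by (intro add_mono mult_left_mono order_trans[OF e2]) auto
      finally show ?thesis .
    qed
    also have "\<dots> \<le> ennreal (d * (2*q+1)) * e V0" using ennreal_arith[OF d q0] .
    also have "d * (2*q+1) = d * (2 ^ card (insert k S) - 1)"
      using insert.hyps unfolding q_def by simp
    finally show ?case unfolding e_def M_def VS'_def V0_def .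
  qed
qed



lemma cube_eq1: "b \<in> Basis \<Longrightarrow> ((c - (r/2) *\<^sub>R One) \<bullet> b \<le> y \<bullet> b \<and> y \<bullet> b \<le> (c + (r/2) *\<^sub>R One) \<bullet> b) = (\<bar>y \<bullet> b - c \<bullet> b\<bar> \<le> r/2)"
  for c y :: "'a::euclidean_space"
  unfolding abs_le_iff by (auto simp: inner_diff_left inner_add_left)

lemma cube_eq: "cube c r = {y. \<forall>b\<in>Basis. \<bar>y \<bullet> b - c \<bullet> b\<bar> \<le> r/2}"
proof (rule set_eqI)
  fix y :: 'a
  show "y \<in> cube c r \<longleftrightarrow> y \<in> {y. \<forall>b\<in>Basis. \<bar>y \<bullet> b - c \<bullet> b\<bar> \<le> r/2}"
    unfolding cube_def mem_box mem_Collect_eq using cube_eq1[of _ c r y] by blast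
qed

lemma emb_inner: "i \<in> Basis \<Longrightarrow> (\<Sum>b\<in>Basis. f b *\<^sub>R b) \<bullet> (i::'a::euclidean_space) = f i"
  by (simp add: inner_sum_left inner_Basis if_distrib sum.delta cong: if_cong)

lemma emb_meas: "(\<lambda>f. \<Sum>b\<in>Basis. f b *\<^sub>R (b::'a::euclidean_space)) \<in> measurable (PiM Basis (\<lambda>_. lborel)) borel"
  by measurable

lemma transfer:
  fixes X :: "'a::euclidean_space set"
  assumes "X \<in> sets borel"
  shows "emeasure lborel X = emeasure (PiM Basis (\<lambda>_. lborel)) ((\<lambda>f. \<Sum>b\<in>Basis. f b *\<^sub>R b) -` X \<inter> space (PiM Basis (\<lambda>_. lborel)))"
  apply (subst lborel_eq)
  using assms emb_meas by (subst emeasure_distr) auto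

lemma main_bound:
  fixes x :: "nat \<Rightarrow> 'a::euclidean_space"
  assumes r: "\<forall>j\<le>N. 0 < r j" and d: "0 \<le> \<delta>" "\<delta> \<le> 1"
  shows "emeasure lborel ((\<Union>j\<le>N. cube (x j) ((1 + \<delta>) * r j)) - (\<Union>j\<le>N. cube (x j) (r j)))
     \<le> ennreal (\<delta> * (2 ^ DIM('a) - 1)) * emeasure lborel (\<Union>j\<le>N. cube (x j) (r j))"
proof -
  define z where "z = (\<lambda>j b. x j \<bullet> b)"
  define w where "w = (\<lambda>(j::nat) (b::'a). r j / 2)"
  let ?e = "\<lambda>f. \<Sum>b\<in>Basis. f b *\<^sub>R (b::'a)"
  let ?M = "PiM Basis (\<lambda>_::'a. lborel::real measure)"
  have p0: "?e -` (\<Union>j\<le>N. cube (x j) (r j)) = VV Basis {..N} z w"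
    unfolding VV_def cube_eq z_def w_def by (fastforce simp: emb_inner)
  have p1: "?e -` (\<Union>j\<le>N. cube (x j) ((1 + \<delta>) * r j)) = VV Basis {..N} z (dil \<delta> Basis w)"
    unfolding VV_def cube_eq z_def w_def dil_def by (fastforce simp: emb_inner)
  have sb: "cube c s \<in> sets borel" for c :: 'a and s unfolding cube_def by simp
  have "emeasure lborel ((\<Union>j\<le>N. cube (x j) ((1 + \<delta>) * r j)) - (\<Union>j\<le>N. cube (x j) (r j)))
     = emeasure ?M ((VV Basis {..N} z (dil \<delta> Basis w) - VV Basis {..N} z w) \<inter> space ?M)"
    using sb by (subst transfer) (auto simp: vimage_Diff p0 p1)
  also have "\<dots> \<le> ennreal (\<delta> * (2 ^ card (Basis::'a set) - 1)) * emeasure ?M (VV Basis {..N} z w \<inter> space ?M)"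
    using r d unfolding w_def by (intro iter) auto
  also have "emeasure ?M (VV Basis {..N} z w \<inter> space ?M) = emeasure lborel (\<Union>j\<le>N. cube (x j) (r j))"
    using sb by (subst transfer) (auto simp: p0)
  finally show ?thesis by simp
qed



lemma cube_borel: "cube c s \<in> sets borel" unfolding cube_def by simp

lemma cube_bounded: "bounded (cube c s)" unfolding cube_def by simp

lemma measure_cube: "0 \<le> s \<Longrightarrow> measure lborel (cube c s) = s ^ DIM('a)" for c :: "'a::euclidean_space"
proof -
  assume s: "0 \<le> s"
  have "measure lborel (cube c s) = (\<Prod>b\<in>(Basis::'a set). s)"
    unfolding cube_def using s
    by (subst measure_lborel_cbox) (auto simp: inner_diff_left inner_add_left algebra_simps intro!: prod.cong)
  thus ?thesis by simp
qed

lemma leb_eq: "X \<in> sets borel \<Longrightarrow> measure lebesgue X = measure lborel X"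
  by simp

lemma sat_sub:
  fixes x :: "nat \<Rightarrow> 'a::euclidean_space"
  assumes "satellite_config N x r" "j \<le> N" "0 < r 0"
  shows "cube (x j) (r j) \<subseteq> cube (x 0) (3 * r 0)"
proof (cases "j = 0")
  case True
  then show ?thesis using assms(3) unfolding cube_eq by auto
next
  case False
  then have "j \<in> {1..N}" using assms(2) by auto
  then obtain p where p: "p \<in> cube (x j) (r j)" "p \<in> cube (x 0) (r 0)" and rj: "r j \<le> r 0"
    using assms(1) unfolding satellite_config_def by blast
  show ?thesis
  proof
    fix y assume y: "y \<in> cube (x j) (r j)"
    have "\<bar>y \<bullet> b - x 0 \<bullet> b\<bar> \<le> 3 * r 0 / 2" if b: "b \<in> Basis" for b
    proof -
      have "\<bar>y \<bullet> b - x j \<bullet> b\<bar> \<le> r j / 2" "\<bar>p \<bullet> b - x j \<bullet> b\<bar> \<le> r j / 2" "\<bar>p \<bullet> b - x 0 \<bullet> b\<bar> \<le> r 0 / 2"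
        using y p b unfolding cube_eq by auto
      thus ?thesis using rj by linarith
    qed
    thus "y \<in> cube (x 0) (3 * r 0)" unfolding cube_eq by auto
  qed
qed

theorem lemma3p3:
  shows "\<exists>C>0. \<forall>(N::nat) (x::nat \<Rightarrow> 'a::euclidean_space) (r::nat \<Rightarrow> real) (\<delta>::real).
     (\<forall>j\<le>N. 0 < r j) \<longrightarrow> 0 < \<delta> \<longrightarrow> \<delta> < 1 \<longrightarrow>
       measure lebesgue ((\<Union>j\<le>N. cube (x j) ((1 + \<delta>) * r j)) - (\<Union>j\<le>N. cube (x j) (r j)))
         \<le> C * \<delta> * measure lebesgue (\<Union>j\<le>N. cube (x j) (r j))
       \<and> (satellite_config N x r \<longrightarrow>
          measure lebesgue ((\<Union>j\<le>N. cube (x j) ((1 + \<delta>) * r j)) - (\<Union>j\<le>N. cube (x j) (r j)))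
            \<le> C * \<delta> * measure lebesgue (cube (x 0) (r 0)))"
proof (intro exI[of _ "6 ^ DIM('a)"] conjI allI impI)
  show "(0::real) < 6 ^ DIM('a)" by simp
  fix N :: nat and x :: "nat \<Rightarrow> 'a" and r :: "nat \<Rightarrow> real" and \<delta> :: real
  assume r: "\<forall>j\<le>N. 0 < r j" and d0: "0 < \<delta>" and d1: "\<delta> < 1"
  define U0 where "U0 = (\<Union>j\<le>N. cube (x j) (r j))"
  define U1 where "U1 = (\<Union>j\<le>N. cube (x j) ((1 + \<delta>) * r j))"
  define n where "n = DIM('a)"
  define c where "c = \<delta> * (2 ^ n - 1)"
  have c0: "0 \<le> c" unfolding c_def using d0 by simp
  have sU0: "U0 \<in> sets borel" and sU1: "U1 \<in> sets borel" unfolding U0_def U1_def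
    using cube_borel by auto
  have bU0: "bounded U0" and bU1: "bounded U1" unfolding U0_def U1_def
    using cube_bounded by auto
  have f0: "emeasure lborel U0 \<noteq> \<infinity>" using emeasure_bounded_finite[OF bU0] by simp
  have fD: "emeasure lborel (U1 - U0) \<noteq> \<infinity>"
    using emeasure_bounded_finite[of "U1 - U0"] bU1 bounded_subset[OF bU1] by auto
  have EM: "emeasure lborel (U1 - U0) \<le> ennreal c * emeasure lborel U0"
  proof -
    have "0 \<le> \<delta>" "\<delta> \<le> 1" using d0 d1 by auto
    from main_bound[OF r this] show ?thesis unfolding U0_def U1_def c_def n_def .
  qed
  have "ennreal (measure lborel (U1 - U0)) \<le> ennreal (c * measure lborel U0)"
    using EM f0 fD c0 by (simp add: emeasure_eq_ennreal_measure ennreal_mult)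
  then have M1: "measure lborel (U1 - U0) \<le> c * measure lborel U0"
    using c0 by (subst (asm) ennreal_le_iff) (auto intro: mult_nonneg_nonneg)
  have LD: "measure lebesgue (U1 - U0) = measure lborel (U1 - U0)" using sU0 sU1 by (intro leb_eq) auto
  have L0: "measure lebesgue U0 = measure lborel U0" using sU0 by (rule leb_eq)
  have m0: "0 \<le> measure lborel U0" by simp
  have c6: "c \<le> 6 ^ DIM('a) * \<delta>"
  proof -
    have "(2::real) ^ n \<le> 6 ^ n" by (intro power_mono) auto
    then have "(2::real) ^ n - 1 \<le> 6 ^ n" by linarith
    then have "\<delta> * (2 ^ n - 1) \<le> \<delta> * 6 ^ n" using d0 by (intro mult_left_mono) auto
    thus ?thesis unfolding c_def n_def by (simp add: mult.commute)
  qed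
  show "measure lebesgue (U1 - U0) \<le> 6 ^ DIM('a) * \<delta> * measure lebesgue U0"
    unfolding LD L0 using M1 mult_right_mono[OF c6 m0] by linarith
  assume sat: "satellite_config N x r"
  have r0: "0 < r 0" using r by auto
  have sub: "U0 \<subseteq> cube (x 0) (3 * r 0)" unfolding U0_def using sat_sub[OF sat _ r0] by auto
  have "measure lborel U0 \<le> measure lborel (cube (x 0) (3 * r 0))"
  proof -
    have fm: "cube (x 0) (3 * r 0) \<in> fmeasurable lborel"
      by (rule fmeasurableI[OF _ emeasure_bounded_finite[OF cube_bounded]]) (simp add: cube_borel)
    show ?thesis using sub sU0 fm by (intro measure_mono_fmeasurable) auto
  qed
  also have "\<dots> = 3 ^ n * measure lborel (cube (x 0) (r 0))"
    using r0 unfolding n_def by (simp add: measure_cube power_mult_distrib)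
  finally have U0le: "measure lborel U0 \<le> 3 ^ n * measure lborel (cube (x 0) (r 0))" .
  have mq: "0 \<le> measure lborel (cube (x 0) (r 0))" by simp
  have Lq: "measure lebesgue (cube (x 0) (r 0)) = measure lborel (cube (x 0) (r 0))"
    by (rule leb_eq[OF cube_borel])
  have "measure lborel (U1 - U0) \<le> c * (3 ^ n * measure lborel (cube (x 0) (r 0)))"
    using M1 mult_left_mono[OF U0le c0] by linarith
  also have "\<dots> = (\<delta> * (2 ^ n - 1) * 3 ^ n) * measure lborel (cube (x 0) (r 0))" unfolding c_def by simp
  also have "\<dots> \<le> (6 ^ n * \<delta>) * measure lborel (cube (x 0) (r 0))"
  proof (rule mult_right_mono[OF _ mq])
    have "((2::real) ^ n - 1) * 3 ^ n \<le> 2 ^ n * 3 ^ n" by simp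
    also have "\<dots> = 6 ^ n" by (simp add: power_mult_distrib[symmetric])
    finally show "\<delta> * (2 ^ n - 1) * 3 ^ n \<le> 6 ^ n * \<delta>"
      using d0 by (simp add: mult.assoc mult.commute[of \<delta>] mult_right_mono)
  qed
  finally show "measure lebesgue (U1 - U0) \<le> 6 ^ DIM('a) * \<delta> * measure lebesgue (cube (x 0) (r 0))"
    unfolding LD Lq n_def .
qed


end
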